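(* For every sequence $s$, $$\mathsf{Seq}\vdash\forall x\,\Big[x\sqsubseteq\overline{s}\;\leftrightarrow\;\bigvee_{t\in I(s)}x=\overline{t}\Big],$$ where $I(s)$ is the set of all initial segments of $s$.
   Context: $\mathcal{L}=\{e,\vdash,\circ\}$ with $e$ a constant and $\vdash$ (infix), $\circ$ binary function symbols. $\mathsf{Seq}$ is the $\mathcal{L}$-theory with axioms: ($\mathsf{Seq}_1$) $\forall xy[x\vdash y\neq e]$; ($\mathsf{Seq}_2$) $\forall x_1x_2y_1y_2[x_1\vdash x_2=y_1\vdash y_2\rightarrow(x_1=y_1\wedge x_2=y_2)]$; ($\mathsf{Seq}_3$) $\forall x[x\circ e=x]$; ($\mathsf{Seq}_4$) $\forall xyz[x\circ(y\vdash z)=(x\circ y)\vdash z]$; ($\mathsf{Seq}_5$) $\forall x[x=e\vee\exists yz[x=y\vdash z]]$. Sequences: $()$ is a sequence, and for $n>0$, if $s_1,\ldots,s_n$ are sequences then $(s_1,\ldots,s_n)$ is a sequence; the initial segments of $(s_1,\ldots,s_n)$ are $()$ and $(s_1,\ldots,s_k)$ for $1\le k\le n$. The sequeral $\overline{s}$ is the term with $\overline{()}=e$ and $\overline{(s_1,\ldots,s_n)}=(\ldots((e\vdash\overline{s_1})\vdash\overline{s_2})\ldots)\vdash\overline{s_n}$. $x\sqsubseteq t$ abbreviates $\exists y[x\circ y=t]$. *)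

theory Defs
  imports Main
begin

text \<open>Hereditarily finite sequences: () is Seq [], (s1,...,sn) is Seq [s1,...,sn].\<close>
datatype sequence = Seq "sequence list"

fun initial_segments :: "sequence \<Rightarrow> sequence set" where
  "initial_segments (Seq xs) = {Seq (take k xs) | k. k \<le> length xs}"

text \<open>A structure (carrier type 'a, constant e, binary operations pr (for |-) and co (for o))
  is a model of the theory Seq iff it satisfies axioms Seq1--Seq5.\<close>
definition seq_model :: "'a \<Rightarrow> ('a \<Rightarrow> 'a \<Rightarrow> 'a) \<Rightarrow> ('a \<Rightarrow> 'a \<Rightarrow> 'a) \<Rightarrow> bool" where
  "seq_model e pr co \<longleftrightarrow>
     (\<forall>x y. pr x y \<noteq> e) \<and>
     (\<forall>x1 x2 y1 y2. pr x1 x2 = pr y1 y2 \<longrightarrow> x1 = y1 \<and> x2 = y2) \<and>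
     (\<forall>x. co x e = x) \<and>
     (\<forall>x y z. co x (pr y z) = pr (co x y) z) \<and>
     (\<forall>x. x = e \<or> (\<exists>y z. x = pr y z))"

primrec sequeral :: "'a \<Rightarrow> ('a \<Rightarrow> 'a \<Rightarrow> 'a) \<Rightarrow> sequence \<Rightarrow> 'a" where
  "sequeral e pr (Seq xs) = foldl pr e (map (sequeral e pr) xs)"

end

theory Submission
  imports Defs
begin

lemma SM1: "seq_model e pr co \<Longrightarrow> pr x y \<noteq> e" by (simp add: seq_model_def)
lemma SM2: "seq_model e pr co \<Longrightarrow> pr a b = pr c d \<Longrightarrow> a = c \<and> b = d" unfolding seq_model_def by metis
lemma SM3: "seq_model e pr co \<Longrightarrow> co x e = x" by (simp add: seq_model_def)
lemma SM4: "seq_model e pr co \<Longrightarrow> co x (pr y z) = pr (co x y) z" by (simp add: seq_model_def)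
lemma SM5: "seq_model e pr co \<Longrightarrow> x = e \<or> (\<exists>y z. x = pr y z)" unfolding seq_model_def by metis

lemma key:
  assumes m: "seq_model e pr co"
  shows "(\<exists>y. co x y = foldl pr e vs) \<longleftrightarrow> (\<exists>k\<le>length vs. x = foldl pr e (take k vs))"
proof (induction vs arbitrary: x rule: rev_induct)
  case Nil
  note A1 = SM1[OF m] and A3 = SM3[OF m] and A4 = SM4[OF m] and A5 = SM5[OF m]
  show ?case
  proof
    assume "\<exists>y. co x y = foldl pr e []"
    then obtain y where y: "co x y = e" by auto
    have "x = e"
    proof (cases "y = e")
      case True then show ?thesis using y A3 by simp
    next
      case False then obtain a b where "y = pr a b" using A5 by blast
      then have "pr (co x a) b = e" using y A4 by simp
      then show ?thesis using A1 by blast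
    qed
    then show "\<exists>k\<le>length []. x = foldl pr e (take k [])" by simp
  next
    assume "\<exists>k\<le>length []. x = foldl pr e (take k [])"
    then have "x = e" by simp
    then show "\<exists>y. co x y = foldl pr e []" using A3 by auto
  qed
next
  case (snoc v vs)
  note A1 = SM1[OF m] and A2 = SM2[OF m] and A3 = SM3[OF m] and A4 = SM4[OF m] and A5 = SM5[OF m]
  show ?case
  proof
    assume "\<exists>y. co x y = foldl pr e (vs @ [v])"
    then obtain y where y: "co x y = pr (foldl pr e vs) v" by auto
    show "\<exists>k\<le>length (vs @ [v]). x = foldl pr e (take k (vs @ [v]))"
    proof (cases "y = e")
      case True
      then have "x = foldl pr e (take (Suc (length vs)) (vs @ [v]))" using y A3 by simp
      then show ?thesis by (intro exI[of _ "Suc (length vs)"]) simp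
    next
      case False then obtain a b where ab: "y = pr a b" using A5 by blast
      then have "pr (co x a) b = pr (foldl pr e vs) v" using y A4 by simp
      then have "co x a = foldl pr e vs" using A2 by blast
      then obtain k where "k \<le> length vs" "x = foldl pr e (take k vs)" using snoc.IH by blast
      then show ?thesis by (intro exI[of _ k]) auto
    qed
  next
    assume "\<exists>k\<le>length (vs @ [v]). x = foldl pr e (take k (vs @ [v]))"
    then obtain k where k: "k \<le> Suc (length vs)" "x = foldl pr e (take k (vs @ [v]))" by auto
    show "\<exists>y. co x y = foldl pr e (vs @ [v])"
    proof (cases "k = Suc (length vs)")
      case True then show ?thesis using k A3 by (intro exI[of _ e]) simp
    next
      case False
      then have "k \<le> length vs" "x = foldl pr e (take k vs)" using k by auto
      then obtain y where "co x y = foldl pr e vs" using snoc.IH by blast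
      then show ?thesis using A4 by (intro exI[of _ "pr y v"]) simp
    qed
  qed
qed

theorem lemma2:
  fixes e :: 'a and pr co :: "'a \<Rightarrow> 'a \<Rightarrow> 'a" and s :: sequence
  assumes "seq_model e pr co"
  shows "\<forall>x. (\<exists>y. co x y = sequeral e pr s) \<longleftrightarrow>
             (\<exists>t \<in> initial_segments s. x = sequeral e pr t)"
proof (cases s)
  case (Seq xs)
  show ?thesis
  proof
    fix x
    have "(\<exists>y. co x y = sequeral e pr s) \<longleftrightarrow>
          (\<exists>k\<le>length (map (sequeral e pr) xs). x = foldl pr e (take k (map (sequeral e pr) xs)))"
      using key[OF assms] Seq by simp
    also have "\<dots> \<longleftrightarrow> (\<exists>t \<in> initial_segments s. x = sequeral e pr t)"
      using Seq by (auto simp: take_map)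
    finally show "(\<exists>y. co x y = sequeral e pr s) \<longleftrightarrow>
             (\<exists>t \<in> initial_segments s. x = sequeral e pr t)" .
  qed
qed

end
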